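(* For every $k\in\mathbb{N}$, $Q(2,2k;2)=(-1)^k(k!)^2$, that is, \[ \sum_{\ell=0}^{2k}(\ell+1)\,s(2k+1,\ell+1)\,k^{\ell}=(-1)^k(k!)^2. \]
   Context: $s(n,k)$ denotes the signed Stirling numbers of the first kind, defined by $\frac{[\ln(1+x)]^k}{k!}=\sum_{n=k}^\infty s(n,k)\frac{x^n}{n!}$ for $|x|<1$; equivalently $\prod_{j=0}^{n-1}(z-j)=\sum_{k=0}^n s(n,k)z^k$. For $m\in\mathbb{N}$, $k\in\mathbb{N}_0$ and $\alpha\in\mathbb{R}$, $Q(m,k;\alpha)=\sum_{\ell=0}^{k}\binom{m+\ell-1}{m-1}s(m+k-1,m+\ell-1)\left(\frac{m+k-\alpha}{2}\right)^{\ell}$. *)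

theory Defs
  imports Complex_Main
begin

text \<open>Signed Stirling numbers of the first kind s(n,k), characterised by
  prod_{j<n} (z - j) = sum_{k<=n} s(n,k) z^k, i.e. by the recurrence
  s(n+1,k+1) = s(n,k) - n s(n,k+1).\<close>
fun sstirling :: "nat \<Rightarrow> nat \<Rightarrow> int" where
  "sstirling 0 0 = 1"
| "sstirling 0 (Suc k) = 0"
| "sstirling (Suc n) 0 = 0"
| "sstirling (Suc n) (Suc k) = sstirling n k - int n * sstirling n (Suc k)"

definition Q :: "nat \<Rightarrow> nat \<Rightarrow> real \<Rightarrow> real" where
  "Q m k \<alpha> = (\<Sum>l = 0..k. real ((m + l - 1) choose (m - 1))
        * real_of_int (sstirling (m + k - 1) (m + l - 1))
        * ((real (m + k) - \<alpha>) / 2) ^ l)"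

end

theory Submission
  imports Defs "HOL-Computational_Algebra.Polynomial"
begin

definition pp :: "nat \<Rightarrow> real poly" where
  "pp n = (\<Prod>j<n. [:- of_nat j, 1:])"

lemma coeff_pp: "coeff (pp n) m = real_of_int (sstirling n m)"
proof (induction n arbitrary: m)
  case 0
  then show ?case by (cases m) (auto simp: pp_def)
next
  case (Suc n)
  have "pp (Suc n) = pCons 0 (pp n) - smult (of_nat n) (pp n)"
    by (simp add: pp_def algebra_simps)
  then show ?case using Suc by (cases m; cases n) (auto simp: coeff_pCons)
qed

lemma deg_pp: "degree (pp n) = n"
  unfolding pp_def by (subst degree_prod_eq_sum_degree) auto

lemma prodfact: "(\<Prod>j\<in>{..2*k} - {k}. (real k - real j)) = (-1)^k * (fact k)^2"
proof -
  have split: "{..2*k} - {k} = {..<k} \<union> {k+1..2*k}" by auto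
  have A: "(\<Prod>j<k. (real k - real j)) = fact k"
    by (simp add: fact_prod_rev atLeast0LessThan of_nat_diff)
  have "(\<Prod>j\<in>{k+1..2*k}. (real k - real j)) = (\<Prod>i\<in>{1..k}. - real i)"
  proof -
    have "(\<Prod>j\<in>{1+k..k+k}. (real k - real j)) = (\<Prod>i\<in>{1..k}. (real k - real (i+k)))"
      by (rule prod.shift_bounds_cl_nat_ivl)
    then show ?thesis by (simp add: mult_2 add.commute)
  qed
  also have "\<dots> = (-1)^k * fact k"
  proof -
    have "(\<Prod>i\<in>{1..k}. - real i) = (\<Prod>i\<in>{1..k}. (-1) * real i)" by simp
    also have "\<dots> = (-1)^k * (\<Prod>i\<in>{1..k}. real i)" by (subst prod.distrib) simp
    also have "(\<Prod>i\<in>{1..k}. real i) = fact k" by (simp add: fact_prod)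
    finally show ?thesis .
  qed
  finally have B: "(\<Prod>j\<in>{k+1..2*k}. (real k - real j)) = (-1)^k * fact k" .
  have "(\<Prod>j\<in>{..<k} \<union> {k+1..2*k}. (real k - real j)) = (\<Prod>j<k. (real k - real j)) * (\<Prod>j\<in>{k+1..2*k}. (real k - real j))"
    by (rule prod.union_disjoint) auto
  then show ?thesis unfolding split using A B by (simp add: power2_eq_square)
qed

theorem mainTheorem11:
  fixes k :: nat
  assumes "k \<ge> 1"
  shows "Q 2 (2 * k) 2 = (-1) ^ k * (fact k) ^ 2"
proof -
  let ?p = "pp (2*k+1)"
  have "Q 2 (2 * k) 2 = (\<Sum>l = 0..2*k. coeff (pderiv ?p) l * real k ^ l)"
    unfolding Q_def coeff_pderiv coeff_pp
    by (intro sum.cong) (auto simp: add.commute)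
  also have "\<dots> = poly (pderiv ?p) (real k)"
    by (simp add: poly_altdef degree_pderiv deg_pp atLeast0AtMost)
  also have "\<dots> = (\<Prod>j\<in>{..2*k} - {k}. (real k - real j))"
  proof -
    have "pderiv ?p = (\<Sum>a\<in>{..<2*k+1}. (\<Prod>j\<in>{..<2*k+1} - {a}. [:- of_nat j, 1:]))"
      unfolding pp_def pderiv_prod by (simp add: pderiv_pCons)
    hence "poly (pderiv ?p) (real k) = (\<Sum>a\<in>{..<2*k+1}. (\<Prod>j\<in>{..<2*k+1} - {a}. (real k - real j)))"
      by (simp add: poly_sum poly_prod)
    also have "\<dots> = (\<Prod>j\<in>{..<2*k+1} - {k}. (real k - real j))"
    proof -
      have "k \<in> {..<2*k+1}" by simp
      moreover have "\<forall>a\<in>{..<2*k+1} - {k}. (\<Prod>j\<in>{..<2*k+1} - {a}. (real k - real j)) = 0"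
        by (auto intro!: prod_zero bexI[of _ k])
      ultimately show ?thesis by (subst sum.remove[of _ k]) (auto intro: sum.neutral)
    qed
    finally show ?thesis by (simp add: lessThan_Suc_atMost[symmetric])
  qed
  also have "\<dots> = (-1)^k * (fact k)^2" by (rule prodfact)
  finally show ?thesis .
qed

end
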